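(* For every regular language $L \subseteq \Sigma^*$ over a finite alphabet $\Sigma$, the 2-overlap catenation closure $2\mathbb{OC}^*(L)$ is regular.
   Context: The 2-overlap catenation of strings $x, y \in \Sigma^*$ is $x \,\overline{\odot}^2\, y = \{ uvw \mid x = uv,\ y = vw,\ u,w \in \Sigma^*,\ v \in \Sigma^*,\ |v| \geq 2 \}$, extended to languages by $L_1 \,\overline{\odot}^2\, L_2 = \bigcup_{x\in L_1, y \in L_2} x \,\overline{\odot}^2\, y$. $2\mathbb{OC}^{(0)}(L) = L$, $2\mathbb{OC}^{(i+1)}(L) = 2\mathbb{OC}^{(i)}(L) \,\overline{\odot}^2\, 2\mathbb{OC}^{(i)}(L)$, and $2\mathbb{OC}^*(L) = \bigcup_{i \geq 0} 2\mathbb{OC}^{(i)}(L)$. *)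

theory Defs
  imports Main
begin

datatype 'a rexp =
    Zero
  | One
  | Atom 'a
  | Plus "'a rexp" "'a rexp"
  | Times "'a rexp" "'a rexp"
  | Star "'a rexp"

definition conc :: "'a list set \<Rightarrow> 'a list set \<Rightarrow> 'a list set" where
  "conc A B = {u @ v | u v. u \<in> A \<and> v \<in> B}"

definition kleene_star :: "'a list set \<Rightarrow> 'a list set" where
  "kleene_star A = (\<Union>n. (conc A ^^ n) {[]})"

fun lang :: "'a rexp \<Rightarrow> 'a list set" where
  "lang Zero = {}"
| "lang One = {[]}"
| "lang (Atom a) = {[a]}"
| "lang (Plus r s) = lang r \<union> lang s"
| "lang (Times r s) = conc (lang r) (lang s)"
| "lang (Star r) = kleene_star (lang r)"

definition regular :: "'a list set \<Rightarrow> bool" where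
  "regular L \<longleftrightarrow> (\<exists>r. lang r = L)"

definition overlap2 :: "'a list \<Rightarrow> 'a list \<Rightarrow> 'a list set" where
  "overlap2 x y = {u @ v @ w | u v w. x = u @ v \<and> y = v @ w \<and> length v \<ge> 2}"

definition overlap2_lang :: "'a list set \<Rightarrow> 'a list set \<Rightarrow> 'a list set" where
  "overlap2_lang L1 L2 = (\<Union>x\<in>L1. \<Union>y\<in>L2. overlap2 x y)"

fun OC2_iter :: "nat \<Rightarrow> 'a list set \<Rightarrow> 'a list set" where
  "OC2_iter 0 L = L"
| "OC2_iter (Suc i) L = overlap2_lang (OC2_iter i L) (OC2_iter i L)"

definition OC2_star :: "'a list set \<Rightarrow> 'a list set" where
  "OC2_star L = (\<Union>i. OC2_iter i L)"

end

theory Submission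
  imports Defs
begin


definition dq :: "'a list \<Rightarrow> 'a list set \<Rightarrow> 'a list set" where
  "dq w A = {z. w @ z \<in> A}"

definition FQ :: "'a list set \<Rightarrow> bool" where
  "FQ A \<longleftrightarrow> finite (range (\<lambda>w. dq w A))"

lemma dq_append: "dq (x @ y) A = dq y (dq x A)" by (simp add: dq_def)
lemma dq_Nil[simp]: "dq [] A = A" by (simp add: dq_def)

lemma regular_Un: "regular A \<Longrightarrow> regular B \<Longrightarrow> regular (A \<union> B)"
  unfolding regular_def by (metis lang.simps(4))
lemma regular_conc: "regular A \<Longrightarrow> regular B \<Longrightarrow> regular (conc A B)"
  unfolding regular_def by (metis lang.simps(5))
lemma regular_star: "regular A \<Longrightarrow> regular (kleene_star A)"
  unfolding regular_def by (metis lang.simps(6))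

lemma concI: "x \<in> A \<Longrightarrow> y \<in> B \<Longrightarrow> z = x @ y \<Longrightarrow> z \<in> conc A B"
  by (auto simp: conc_def)
lemma concE: "z \<in> conc A B \<Longrightarrow> (\<And>x y. z = x @ y \<Longrightarrow> x \<in> A \<Longrightarrow> y \<in> B \<Longrightarrow> P) \<Longrightarrow> P"
  by (auto simp: conc_def)

lemma star_Nil: "[] \<in> kleene_star A"
  unfolding kleene_star_def by (rule UN_I[of 0]) auto

lemma conc_star: "x \<in> A \<Longrightarrow> y \<in> kleene_star A \<Longrightarrow> x @ y \<in> kleene_star A"
proof -
  assume x: "x \<in> A" and "y \<in> kleene_star A"
  then obtain n where "y \<in> (conc A ^^ n) {[]}" unfolding kleene_star_def by auto
  hence "x @ y \<in> (conc A ^^ Suc n) {[]}" using x by (auto intro: concI)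
  thus ?thesis unfolding kleene_star_def by (meson UNIV_I UN_I)
qed

lemma in_star: "x \<in> A \<Longrightarrow> x \<in> kleene_star A"
  using conc_star[OF _ star_Nil, of x A] by simp

lemma star_append_pow: "x \<in> (conc A ^^ n) {[]} \<Longrightarrow> y \<in> kleene_star A \<Longrightarrow> x @ y \<in> kleene_star A"
proof (induction n arbitrary: x)
  case 0 thus ?case by simp
next
  case (Suc n)
  then obtain a x' where "x = a @ x'" "a \<in> A" "x' \<in> (conc A ^^ n) {[]}" by (auto elim: concE)
  moreover have "x' @ y \<in> kleene_star A" using Suc.IH calculation(3) Suc.prems(2) by blast
  ultimately have "a @ (x' @ y) \<in> kleene_star A" using conc_star by blast
  thus ?case using \<open>x = a @ x'\<close> by simp
qed

lemma star_append: "x \<in> kleene_star A \<Longrightarrow> y \<in> kleene_star A \<Longrightarrow> x @ y \<in> kleene_star A"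
proof -
  assume "x \<in> kleene_star A" "y \<in> kleene_star A"
  then obtain n where "x \<in> (conc A ^^ n) {[]}" unfolding kleene_star_def by blast
  from star_append_pow[OF this \<open>y \<in> kleene_star A\<close>] show ?thesis .
qed

lemma star_split_pow:
  "y \<in> (conc A ^^ n) {[]} \<Longrightarrow> y = w @ z \<Longrightarrow> w \<noteq> [] \<Longrightarrow>
   \<exists>u v t s. w = u @ v \<and> v \<noteq> [] \<and> u \<in> kleene_star A \<and> v @ t \<in> A \<and> s \<in> kleene_star A \<and> z = t @ s"
proof (induction n arbitrary: y w z)
  case 0 thus ?case by simp
next
  case (Suc n)
  then obtain a y' where y: "y = a @ y'" "a \<in> A" "y' \<in> (conc A ^^ n) {[]}" by (auto elim: concE)
  have sy': "y' \<in> kleene_star A" using y(3) unfolding kleene_star_def by auto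
  from y(1) Suc.prems(2) have "a @ y' = w @ z" by simp
  then obtain us where us: "(a = w @ us \<and> us @ y' = z) \<or> (a @ us = w \<and> y' = us @ z)"
    by (auto simp: append_eq_append_conv2)
  show ?case
  proof (cases "a = w @ us \<and> us @ y' = z")
    case True
    thus ?thesis using y sy' Suc.prems star_Nil by (intro exI[of _ "[]"] exI[of _ w] exI[of _ us] exI[of _ y']) auto
  next
    case False
    with us have h: "a @ us = w" "y' = us @ z" by auto
    show ?thesis
    proof (cases "us = []")
      case True
      thus ?thesis using h y sy' Suc.prems star_Nil
        by (intro exI[of _ "[]"] exI[of _ w] exI[of _ "[]"] exI[of _ y']) auto
    next
      case False
      from Suc.IH[OF y(3) h(2) False] obtain u v t s where
        "us = u @ v" "v \<noteq> []" "u \<in> kleene_star A" "v @ t \<in> A" "s \<in> kleene_star A" "z = t @ s" by blast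
      thus ?thesis using h y conc_star by (intro exI[of _ "a @ u"] exI[of _ v] exI[of _ t] exI[of _ s]) auto
    qed
  qed
qed

lemma dq_star: "w \<noteq> [] \<Longrightarrow> dq w (kleene_star A) =
   \<Union>((\<lambda>v. conc (dq v A) (kleene_star A)) ` {v. \<exists>u. w = u @ v \<and> u \<in> kleene_star A \<and> v \<noteq> []})"
proof (intro equalityI subsetI)
  fix z assume w: "w \<noteq> []" and "z \<in> dq w (kleene_star A)"
  hence "w @ z \<in> kleene_star A" by (simp add: dq_def)
  then obtain n where "w @ z \<in> (conc A ^^ n) {[]}" unfolding kleene_star_def by auto
  from star_split_pow[OF this refl w] obtain u v t s where
    "w = u @ v" "v \<noteq> []" "u \<in> kleene_star A" "v @ t \<in> A" "s \<in> kleene_star A" "z = t @ s" by blast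
  thus "z \<in> \<Union>((\<lambda>v. conc (dq v A) (kleene_star A)) ` {v. \<exists>u. w = u @ v \<and> u \<in> kleene_star A \<and> v \<noteq> []})"
    by (auto simp: conc_def dq_def)
next
  fix z assume "z \<in> \<Union>((\<lambda>v. conc (dq v A) (kleene_star A)) ` {v. \<exists>u. w = u @ v \<and> u \<in> kleene_star A \<and> v \<noteq> []})"
  then obtain u v t s where "w = u @ v" "u \<in> kleene_star A" "v @ t \<in> A" "s \<in> kleene_star A" "z = t @ s"
    by (auto simp: conc_def dq_def)
  hence "w @ z = u @ ((v @ t) @ s)" by simp
  moreover have "(v @ t) @ s \<in> kleene_star A" using conc_star \<open>v @ t \<in> A\<close> \<open>s \<in> kleene_star A\<close> by blast
  ultimately show "z \<in> dq w (kleene_star A)"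
    using star_append \<open>u \<in> kleene_star A\<close> by (metis dq_def mem_Collect_eq)
qed

lemma dq_conc: "dq w (conc A B) = conc (dq w A) B \<union> \<Union>((\<lambda>v. dq v B) ` {v. \<exists>u. w = u @ v \<and> u \<in> A})"
proof (intro equalityI subsetI)
  fix z assume "z \<in> dq w (conc A B)"
  then obtain x y where xy: "x @ y = w @ z" "x \<in> A" "y \<in> B" by (auto simp: dq_def conc_def)
  then obtain us where "(x = w @ us \<and> us @ y = z) \<or> (x @ us = w \<and> y = us @ z)"
    by (auto simp: append_eq_append_conv2)
  thus "z \<in> conc (dq w A) B \<union> \<Union>((\<lambda>v. dq v B) ` {v. \<exists>u. w = u @ v \<and> u \<in> A})"
    using xy by (auto simp: dq_def conc_def)
next
  fix z assume "z \<in> conc (dq w A) B \<union> \<Union>((\<lambda>v. dq v B) ` {v. \<exists>u. w = u @ v \<and> u \<in> A})"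
  thus "z \<in> dq w (conc A B)"
    by (auto simp: dq_def elim!: concE intro: concI)
qed

lemma FQ_Zero: "FQ {}"
proof -
  have "range (\<lambda>w. dq w ({}::'a list set)) \<subseteq> {{}}" by (auto simp: dq_def)
  thus ?thesis unfolding FQ_def using finite_subset by blast
qed

lemma FQ_One: "FQ {[]}"
proof -
  have "range (\<lambda>w. dq w {[]}) \<subseteq> {{[]}, {}}" by (auto simp: dq_def)
  thus ?thesis unfolding FQ_def using finite_subset by blast
qed

lemma FQ_Atom: "FQ {[a]}"
proof -
  have "range (\<lambda>w. dq w {[a]}) \<subseteq> {{[a]}, {[]}, {}}"
  proof
    fix X assume "X \<in> range (\<lambda>w. dq w {[a]})"
    then obtain w where X: "X = dq w {[a]}" by auto
    show "X \<in> {{[a]}, {[]}, {}}"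
    proof (cases w)
      case Nil thus ?thesis using X by simp
    next
      case (Cons b w')
      thus ?thesis using X by (cases w') (auto simp: dq_def)
    qed
  qed
  thus ?thesis unfolding FQ_def using finite_subset by blast
qed

lemma FQ_Un: "FQ A \<Longrightarrow> FQ B \<Longrightarrow> FQ (A \<union> B)"
proof -
  assume a: "FQ A" and b: "FQ B"
  have "range (\<lambda>w. dq w (A \<union> B)) \<subseteq> (\<lambda>(p, q). p \<union> q) ` (range (\<lambda>w. dq w A) \<times> range (\<lambda>w. dq w B))"
  proof
    fix X assume "X \<in> range (\<lambda>w. dq w (A \<union> B))"
    then obtain w where X: "X = dq w (A \<union> B)" by auto
    have "X = (\<lambda>(p, q). p \<union> q) (dq w A, dq w B)" unfolding X by (auto simp: dq_def)
    thus "X \<in> (\<lambda>(p, q). p \<union> q) ` (range (\<lambda>w. dq w A) \<times> range (\<lambda>w. dq w B))"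
      by (rule image_eqI) auto
  qed
  moreover have "finite ((\<lambda>(p, q). p \<union> q) ` (range (\<lambda>w. dq w A) \<times> range (\<lambda>w. dq w B)))"
    using a b unfolding FQ_def by simp
  ultimately show ?thesis unfolding FQ_def by (rule finite_subset)
qed

lemma FQ_conc: "FQ A \<Longrightarrow> FQ B \<Longrightarrow> FQ (conc A B)"
proof -
  assume a: "FQ A" and b: "FQ B"
  have "range (\<lambda>w. dq w (conc A B)) \<subseteq> (\<lambda>(p, S). conc p B \<union> \<Union>S) ` (range (\<lambda>w. dq w A) \<times> Pow (range (\<lambda>w. dq w B)))"
  proof
    fix X assume "X \<in> range (\<lambda>w. dq w (conc A B))"
    then obtain w where X: "X = dq w (conc A B)" by auto
    show "X \<in> (\<lambda>(p, S). conc p B \<union> \<Union>S) ` (range (\<lambda>w. dq w A) \<times> Pow (range (\<lambda>w. dq w B)))"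
      unfolding X dq_conc
      by (rule image_eqI[of _ _ "(dq w A, (\<lambda>v. dq v B) ` {v. \<exists>u. w = u @ v \<and> u \<in> A})"]) auto
  qed
  moreover have "finite ((\<lambda>(p, S). conc p B \<union> \<Union>S) ` (range (\<lambda>w. dq w A) \<times> Pow (range (\<lambda>w. dq w B))))"
    using a b unfolding FQ_def by simp
  ultimately show ?thesis unfolding FQ_def by (rule finite_subset)
qed

lemma FQ_star: "FQ A \<Longrightarrow> FQ (kleene_star A)"
proof -
  assume a: "FQ A"
  have "range (\<lambda>w. dq w (kleene_star A)) \<subseteq> insert (kleene_star A)
      ((\<lambda>S. \<Union>((\<lambda>q. conc q (kleene_star A)) ` S)) ` Pow (range (\<lambda>w. dq w A)))"
  proof
    fix X assume "X \<in> range (\<lambda>w. dq w (kleene_star A))"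
    then obtain w where X: "X = dq w (kleene_star A)" by auto
    show "X \<in> insert (kleene_star A) ((\<lambda>S. \<Union>((\<lambda>q. conc q (kleene_star A)) ` S)) ` Pow (range (\<lambda>w. dq w A)))"
    proof (cases "w = []")
      case True thus ?thesis using X by simp
    next
      case False
      show ?thesis unfolding X dq_star[OF False]
        by (rule insertI2, rule image_eqI[of _ _ "(\<lambda>v. dq v A) ` {v. \<exists>u. w = u @ v \<and> u \<in> kleene_star A \<and> v \<noteq> []}"])
           (auto simp: image_image)
    qed
  qed
  moreover have "finite (insert (kleene_star A)
      ((\<lambda>S. \<Union>((\<lambda>q. conc q (kleene_star A)) ` S)) ` Pow (range (\<lambda>w. dq w A))))"
    using a unfolding FQ_def by simp
  ultimately show ?thesis unfolding FQ_def by (rule finite_subset)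
qed

lemma FQ_lang: "FQ (lang r)"
  by (induction r) (auto intro: FQ_Zero FQ_One FQ_Atom FQ_Un FQ_conc FQ_star)

lemma regular_FQ: "regular A \<Longrightarrow> FQ A"
  unfolding regular_def using FQ_lang by blast



lemma regular_word: "regular {w}"
proof (induction w)
  case Nil thus ?case unfolding regular_def by (metis lang.simps(2))
next
  case (Cons a w)
  then obtain r where "lang r = {w}" unfolding regular_def by blast
  hence "lang (Times (Atom a) r) = {a # w}" by (auto simp: conc_def)
  thus ?case unfolding regular_def by blast
qed

lemma regular_finite: "finite A \<Longrightarrow> regular A"
proof (induction rule: finite_induct)
  case empty thus ?case unfolding regular_def by (metis lang.simps(1))
next
  case (insert w A)
  have "insert w A = {w} \<union> A" by auto
  thus ?case using regular_Un[OF regular_word insert(3)] by simp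
qed

lemma regular_Union: "finite F \<Longrightarrow> (\<forall>X\<in>F. regular X) \<Longrightarrow> regular (\<Union>F)"
proof (induction rule: finite_induct)
  case empty thus ?case using regular_finite[of "{}"] by simp
next
  case (insert X F) thus ?case by (simp add: regular_Un)
qed

fun path :: "'a set \<Rightarrow> 'a list set set \<Rightarrow> 'a list set \<Rightarrow> 'a list \<Rightarrow> 'a list set \<Rightarrow> bool" where
  "path S A p [] q = (p = q)"
| "path S A p (a # w) q = (a \<in> S \<and> (if w = [] then dq [a] p = q else dq [a] p \<in> A \<and> path S A (dq [a] p) w q))"

lemma path_q: "path S A p w q \<Longrightarrow> q = dq w p"
proof (induction w arbitrary: p)
  case Nil thus ?case by simp
next
  case (Cons a w)
  have e: "dq (a # w) p = dq w (dq [a] p)" using dq_append[of "[a]" w p] by simp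
  show ?case using Cons e by (auto split: if_splits)
qed

lemma path_mono: "path S A p w q \<Longrightarrow> A \<subseteq> B \<Longrightarrow> path S B p w q"
  by (induction w arbitrary: p) (auto split: if_splits)

lemma path_append: "path S A p x r \<Longrightarrow> path S A r y q \<Longrightarrow> x \<noteq> [] \<Longrightarrow> y \<noteq> [] \<Longrightarrow> r \<in> A \<Longrightarrow>
   path S A p (x @ y) q"
  by (induction x arbitrary: p) (auto split: if_splits)

lemma path_append_gen: "path S A p x r \<Longrightarrow> path S A r y q \<Longrightarrow> (x = [] \<or> y = [] \<or> r \<in> A) \<Longrightarrow>
   path S A p (x @ y) q"
  using path_append by (cases "x = []"; cases "y = []") auto

lemma path_split_first: "path S (insert k A) p w q \<Longrightarrow> path S A p w q \<or>
   (\<exists>x y. w = x @ y \<and> x \<noteq> [] \<and> path S A p x k \<and> path S (insert k A) k y q \<and> length y < length w)"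
proof (induction w arbitrary: p)
  case Nil thus ?case by simp
next
  case (Cons a w)
  show ?case
  proof (cases "w = []")
    case True thus ?thesis using Cons.prems by simp
  next
    case False
    let ?r = "dq [a] p"
    have a: "a \<in> S" and r: "?r \<in> insert k A" and pr: "path S (insert k A) ?r w q"
      using Cons.prems False by auto
    show ?thesis
    proof (cases "?r = k")
      case True
      thus ?thesis using a pr by (intro disjI2 exI[of _ "[a]"] exI[of _ w]) auto
    next
      case rk: False
      hence rA: "?r \<in> A" using r by auto
      from Cons.IH[OF pr] show ?thesis
      proof
        assume "path S A ?r w q"
        thus ?thesis using a rA False by auto
      next
        assume "\<exists>x y. w = x @ y \<and> x \<noteq> [] \<and> path S A ?r x k \<and> path S (insert k A) k y q \<and> length y < length w"
        then obtain x y where "w = x @ y" "x \<noteq> []" "path S A ?r x k" "path S (insert k A) k y q" "length y < length w"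
          by blast
        thus ?thesis using a rA by (intro disjI2 exI[of _ "a # x"] exI[of _ y]) auto
      qed
    qed
  qed
qed

definition P :: "'a set \<Rightarrow> 'a list set set \<Rightarrow> 'a list set \<Rightarrow> 'a list set \<Rightarrow> 'a list set" where
  "P S A p q = {w. path S A p w q}"

lemma path_K: "path S (insert k A) k w q \<Longrightarrow> w \<in> conc (kleene_star (P S A k k)) (P S A k q)"
proof (induction "length w" arbitrary: w rule: less_induct)
  case less
  from path_split_first[OF less.prems] show ?case
  proof
    assume "path S A k w q"
    thus ?thesis using star_Nil by (auto simp: P_def intro: concI)
  next
    assume "\<exists>x y. w = x @ y \<and> x \<noteq> [] \<and> path S A k x k \<and> path S (insert k A) k y q \<and> length y < length w"
    then obtain x y where h: "w = x @ y" "path S A k x k" "path S (insert k A) k y q" "length y < length w"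
      by blast
    from less.hyps[OF h(4) h(3)] obtain y1 y2 where "y = y1 @ y2" "y1 \<in> kleene_star (P S A k k)" "y2 \<in> P S A k q"
      by (auto elim: concE)
    moreover have "x \<in> P S A k k" using h(2) by (simp add: P_def)
    ultimately have "x @ y1 \<in> kleene_star (P S A k k)" "y2 \<in> P S A k q" "w = (x @ y1) @ y2"
      using h(1) conc_star by auto
    thus ?thesis by (intro concI)
  qed
qed

lemma star_P: "y \<in> kleene_star (P S A k k) \<Longrightarrow> path S (insert k A) k y k"
proof -
  assume "y \<in> kleene_star (P S A k k)"
  then obtain n where "y \<in> (conc (P S A k k) ^^ n) {[]}" unfolding kleene_star_def by auto
  thus ?thesis
  proof (induction n arbitrary: y)
    case 0 thus ?case by simp
  next
    case (Suc n)
    then obtain x y' where "y = x @ y'" "x \<in> P S A k k" "y' \<in> (conc (P S A k k) ^^ n) {[]}"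
      by (auto elim: concE)
    moreover hence "path S (insert k A) k x k" by (auto simp: P_def intro: path_mono)
    ultimately show ?case using Suc.IH path_append_gen by fastforce
  qed
qed

lemma P_insert: "P S (insert k A) p q =
   P S A p q \<union> conc (P S A p k) (conc (kleene_star (P S A k k)) (P S A k q))"
proof (intro equalityI subsetI)
  fix w assume "w \<in> P S (insert k A) p q"
  hence "path S (insert k A) p w q" by (simp add: P_def)
  from path_split_first[OF this]
  show "w \<in> P S A p q \<union> conc (P S A p k) (conc (kleene_star (P S A k k)) (P S A k q))"
  proof
    assume "path S A p w q" thus ?thesis by (simp add: P_def)
  next
    assume "\<exists>x y. w = x @ y \<and> x \<noteq> [] \<and> path S A p x k \<and> path S (insert k A) k y q \<and> length y < length w"
    then obtain x y where "w = x @ y" "path S A p x k" "path S (insert k A) k y q" by blast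
    moreover from path_K[OF this(3)] have "y \<in> conc (kleene_star (P S A k k)) (P S A k q)" .
    ultimately show ?thesis by (intro UnI2 concI[of x _ y _ w]) (auto simp: P_def)
  qed
next
  fix w assume "w \<in> P S A p q \<union> conc (P S A p k) (conc (kleene_star (P S A k k)) (P S A k q))"
  thus "w \<in> P S (insert k A) p q"
  proof
    assume "w \<in> P S A p q" thus ?thesis by (auto simp: P_def intro: path_mono)
  next
    assume "w \<in> conc (P S A p k) (conc (kleene_star (P S A k k)) (P S A k q))"
    then obtain x y z where h: "w = x @ y @ z" "path S A p x k" "y \<in> kleene_star (P S A k k)" "path S A k z q"
      by (auto simp: P_def elim!: concE)
    have 1: "path S (insert k A) p x k" using h(2) by (auto intro: path_mono)
    have 2: "path S (insert k A) k y k" using star_P h(3) by blast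
    have 3: "path S (insert k A) k z q" using h(4) by (auto intro: path_mono)
    have "path S (insert k A) k (y @ z) q" using path_append_gen[OF 2 3] by simp
    hence "path S (insert k A) p (x @ y @ z) q" using path_append_gen[OF 1] by simp
    thus ?thesis using h(1) by (simp add: P_def)
  qed
qed

lemma P_empty_sub: "P S {} p q \<subseteq> insert [] ((\<lambda>a. [a]) ` S)"
proof
  fix w assume "w \<in> P S {} p q"
  hence "path S {} p w q" by (simp add: P_def)
  thus "w \<in> insert [] ((\<lambda>a. [a]) ` S)"
    by (cases w) (auto split: if_splits)
qed

lemma regular_P: "finite A \<Longrightarrow> finite S \<Longrightarrow> regular (P S A p q)"
proof (induction A arbitrary: p q rule: finite_induct)
  case empty
  have "finite (insert [] ((\<lambda>a. [a]) ` S))" using empty by simp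
  from finite_subset[OF P_empty_sub this] show ?case by (rule regular_finite)
next
  case (insert k A)
  thus ?case unfolding P_insert by (intro regular_Un regular_conc regular_star) auto
qed

lemma path_lists: "w \<in> lists S \<Longrightarrow> path S (range (\<lambda>w. dq w A0)) (dq v A0) w (dq (v @ w) A0)"
proof (induction w arbitrary: v)
  case Nil thus ?case by simp
next
  case (Cons a w)
  have e: "dq [a] (dq v A0) = dq (v @ [a]) A0" by (simp add: dq_append)
  show ?case using Cons.IH[of "v @ [a]"] Cons.prems e by auto
qed

theorem FQ_regular: "finite S \<Longrightarrow> A \<subseteq> lists S \<Longrightarrow> FQ A \<Longrightarrow> regular A"
proof -
  assume S: "finite S" and AS: "A \<subseteq> lists S" and F: "FQ A"
  let ?Q = "range (\<lambda>w. dq w A)"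
  have fQ: "finite ?Q" using F by (simp add: FQ_def)
  have "A = \<Union>((\<lambda>q. P S ?Q A q) ` {q \<in> ?Q. [] \<in> q})"
  proof (intro equalityI subsetI)
    fix w assume w: "w \<in> A"
    hence "path S ?Q A w (dq w A)" using path_lists[of w S A "[]"] AS by auto
    moreover have "[] \<in> dq w A" using w by (simp add: dq_def)
    ultimately show "w \<in> \<Union>((\<lambda>q. P S ?Q A q) ` {q \<in> ?Q. [] \<in> q})" by (auto simp: P_def)
  next
    fix w assume "w \<in> \<Union>((\<lambda>q. P S ?Q A q) ` {q \<in> ?Q. [] \<in> q})"
    then obtain q where "path S ?Q A w q" "[] \<in> q" by (auto simp: P_def)
    thus "w \<in> A" using path_q by (fastforce simp: dq_def)
  qed
  moreover have "regular (\<Union>((\<lambda>q. P S ?Q A q) ` {q \<in> ?Q. [] \<in> q}))"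
    using fQ S by (intro regular_Union) (auto intro: regular_P)
  ultimately show ?thesis by simp
qed



definition MM :: "'a list set \<Rightarrow> 'a list set" where
  "MM L = {m \<in> L. 2 \<le> length m}"

inductive_set ROC :: "'a list set \<Rightarrow> 'a list set" for M where
  base: "m \<in> M \<Longrightarrow> m \<in> ROC M"
| step: "x @ b \<in> ROC M \<Longrightarrow> b @ c \<in> M \<Longrightarrow> 2 \<le> length b \<Longrightarrow> x @ b @ c \<in> ROC M"

lemma ROC_overlap: "y \<in> ROC M \<Longrightarrow> x \<in> ROC M \<Longrightarrow> t \<in> overlap2 x y \<Longrightarrow> t \<in> ROC M"
proof (induction y arbitrary: x t rule: ROC.induct)
  case (base m)
  then obtain u v w where "t = u @ v @ w" "x = u @ v" "m = v @ w" "2 \<le> length v"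
    by (auto simp: overlap2_def)
  thus ?case using ROC.step[of u v M w] base by simp
next
  case (step xa b c)
  from step.prems(2) obtain u v w where h: "t = u @ v @ w" "x = u @ v" "xa @ b @ c = v @ w" "2 \<le> length v"
    by (auto simp: overlap2_def)
  from h(3) have "(xa @ b) @ c = v @ w" by simp
  then obtain us where us: "(xa @ b = v @ us \<and> us @ c = w) \<or> ((xa @ b) @ us = v \<and> c = us @ w)"
    using append_eq_append_conv2[of "xa @ b" c v w] by blast
  show ?case
  proof (cases "xa @ b = v @ us \<and> us @ c = w")
    case True
    have "u @ v @ us \<in> overlap2 x (xa @ b)" using True h by (auto simp: overlap2_def)
    hence "(u @ xa) @ b \<in> ROC M" using step.IH step.prems(1) True by auto
    from ROC.step[OF this step.hyps(2,3)] show ?thesis using True h by simp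
  next
    case False
    with us have e: "(xa @ b) @ us = v" "c = us @ w" by auto
    have "(u @ xa) @ (b @ us) \<in> ROC M" using step.prems(1) h(2) e by simp
    moreover have "(b @ us) @ w \<in> M" using step.hyps(2) e by simp
    moreover have "2 \<le> length (b @ us)" using step.hyps(3) by simp
    ultimately have "(u @ xa) @ (b @ us) @ w \<in> ROC M" by (rule ROC.step)
    thus ?thesis using h(1) e(1)[symmetric] by simp
  qed
qed

lemma self_overlap: "2 \<le> length w \<Longrightarrow> w \<in> overlap2 w w"
  unfolding overlap2_def by (rule CollectI, intro exI[of _ "[]"] exI[of _ w]) auto

lemma iter_up: "w \<in> OC2_iter i L \<Longrightarrow> 2 \<le> length w \<Longrightarrow> w \<in> OC2_iter (i + k) L"
proof (induction k)
  case 0 thus ?case by simp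
next
  case (Suc k)
  hence "w \<in> OC2_iter (i + k) L" by simp
  hence "w \<in> overlap2_lang (OC2_iter (i + k) L) (OC2_iter (i + k) L)"
    using self_overlap[OF Suc.prems(2)] by (auto simp: overlap2_lang_def)
  thus ?case by simp
qed

lemma iter_sub_ROC: "OC2_iter (Suc i) L \<subseteq> ROC (MM L)"
proof (induction i)
  case 0
  show ?case
  proof
    fix t assume "t \<in> OC2_iter (Suc 0) L"
    then obtain x y where xy: "x \<in> L" "y \<in> L" "t \<in> overlap2 x y" by (auto simp: overlap2_lang_def)
    then obtain u v w where "x = u @ v" "y = v @ w" "2 \<le> length v" by (auto simp: overlap2_def)
    hence "x \<in> ROC (MM L)" "y \<in> ROC (MM L)" using xy by (auto simp: MM_def intro: ROC.base)
    thus "t \<in> ROC (MM L)" using ROC_overlap xy(3) by blast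
  qed
next
  case (Suc i)
  show ?case
  proof
    fix t assume "t \<in> OC2_iter (Suc (Suc i)) L"
    then obtain x y where xy: "x \<in> OC2_iter (Suc i) L" "y \<in> OC2_iter (Suc i) L" "t \<in> overlap2 x y"
      by (auto simp: overlap2_lang_def)
    thus "t \<in> ROC (MM L)" using ROC_overlap Suc.IH by blast
  qed
qed

lemma ROC_len: "w \<in> ROC (MM L) \<Longrightarrow> 2 \<le> length w"
  by (induction rule: ROC.induct) (auto simp: MM_def)

lemma ROC_sub_iter: "w \<in> ROC (MM L) \<Longrightarrow> \<exists>i. w \<in> OC2_iter i L"
proof (induction rule: ROC.induct)
  case (base m) thus ?case by (intro exI[of _ 0]) (auto simp: MM_def)
next
  case (step x b c)
  then obtain i where i: "x @ b \<in> OC2_iter i L" by blast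
  have "b @ c \<in> OC2_iter 0 L" "2 \<le> length (b @ c)" using step.hyps(2) by (auto simp: MM_def)
  hence 1: "b @ c \<in> OC2_iter i L" using iter_up[of "b @ c" 0 L i] by simp
  have 2: "2 \<le> length (x @ b)" using step.hyps(3) by simp
  have 3: "x @ b @ c \<in> overlap2 (x @ b) (b @ c)"
    unfolding overlap2_def by (rule CollectI, intro exI[of _ x] exI[of _ b] exI[of _ c]) (use step.hyps(3) in auto)
  have "x @ b @ c \<in> OC2_iter (Suc i) L" using 1 i 3 by (auto simp: overlap2_lang_def)
  thus ?case by blast
qed

lemma OC2_eq: "OC2_star L = L \<union> ROC (MM L)"
proof (intro equalityI subsetI)
  fix w assume "w \<in> OC2_star L"
  then obtain i where "w \<in> OC2_iter i L" by (auto simp: OC2_star_def)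
  thus "w \<in> L \<union> ROC (MM L)" using iter_sub_ROC by (cases i) auto
next
  fix w assume "w \<in> L \<union> ROC (MM L)"
  thus "w \<in> OC2_star L"
  proof
    assume "w \<in> L" thus ?thesis unfolding OC2_star_def by (intro UN_I[of 0]) auto
  next
    assume "w \<in> ROC (MM L)"
    thus ?thesis using ROC_sub_iter unfolding OC2_star_def by blast
  qed
qed

inductive Cont :: "'a list set \<Rightarrow> 'a list \<Rightarrow> 'a list \<Rightarrow> bool" for M where
  nil: "Cont M p []"
| step: "p = p1 @ b \<Longrightarrow> 2 \<le> length b \<Longrightarrow> b @ c \<in> M \<Longrightarrow> Cont M (p @ c) y \<Longrightarrow> Cont M p (c @ y)"

lemma cont_snoc: "Cont M p y \<Longrightarrow> p @ y = s @ b \<Longrightarrow> 2 \<le> length b \<Longrightarrow> b @ c \<in> M \<Longrightarrow> Cont M p (y @ c)"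
proof (induction rule: Cont.induct)
  case (nil p)
  have "Cont M p (c @ [])" by (rule Cont.step[of p s b c]) (use nil in \<open>auto intro: Cont.nil\<close>)
  thus ?case by simp
next
  case (step p p1 b' c' y)
  have "Cont M (p @ c') (y @ c)" using step by simp
  from Cont.step[OF step.hyps(1,2,3) this] show ?case by simp
qed

lemma cont_ROC: "Cont M p y \<Longrightarrow> x @ p \<in> ROC M \<Longrightarrow> x @ p @ y \<in> ROC M"
proof (induction arbitrary: x rule: Cont.induct)
  case (nil p) thus ?case by simp
next
  case (step p p1 b c y)
  have "(x @ p1) @ b \<in> ROC M" using step.prems step.hyps(1) by simp
  from ROC.step[OF this step.hyps(3,2)] have "x @ (p @ c) \<in> ROC M" using step.hyps(1) by simp
  from step.IH[OF this] show ?case by simp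
qed

definition Acond :: "'a list set \<Rightarrow> 'a list \<Rightarrow> 'a list \<Rightarrow> bool" where
  "Acond M u a1 \<longleftrightarrow> a1 = u \<or> (\<exists>x0 b d. u = x0 @ b @ d \<and> x0 @ b \<in> ROC M \<and> a1 = b @ d \<and> 2 \<le> length b)"

definition Good :: "'a list set \<Rightarrow> 'a list \<Rightarrow> 'a list \<Rightarrow> bool" where
  "Good M u z \<longleftrightarrow> (\<exists>a1 a2 c1 c2 y p. Acond M u a1 \<and> u = p @ a2 \<and> a2 \<noteq> [] \<and> c1 \<noteq> [] \<and> a1 @ c1 \<in> M \<and>
     a2 @ c2 \<in> M \<and> (\<exists>e. c2 = c1 @ e) \<and> z = c2 @ y \<and> Cont M c2 y)"

lemma GoodI: "Acond M u a1 \<Longrightarrow> u = p @ a2 \<Longrightarrow> a2 \<noteq> [] \<Longrightarrow> c1 \<noteq> [] \<Longrightarrow> a1 @ c1 \<in> M \<Longrightarrow>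
     a2 @ c2 \<in> M \<Longrightarrow> c2 = c1 @ e \<Longrightarrow> z = c2 @ y \<Longrightarrow> Cont M c2 y \<Longrightarrow> Good M u z"
  unfolding Good_def by blast

lemma fwd: "w \<in> ROC M \<Longrightarrow> w = u @ z \<Longrightarrow> u \<noteq> [] \<Longrightarrow> (z = [] \<and> u \<in> ROC M) \<or> Good M u z"
proof (induction arbitrary: u z rule: ROC.induct)
  case (base m)
  show ?case
  proof (cases "z = []")
    case True thus ?thesis using base by (auto intro: ROC.base)
  next
    case False
    have "Acond M u u" by (simp add: Acond_def)
    have "u @ z \<in> M" using base by simp
    have "Good M u z"
      by (rule GoodI[of M u u "[]" u z z "[]" z "[]"]) (use \<open>Acond M u u\<close> \<open>u @ z \<in> M\<close> base.prems(2) False in \<open>auto intro: Cont.nil\<close>)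
    thus ?thesis by blast
  qed
next
  case (step x b c)
  from step.prems(1) have "(x @ b) @ c = u @ z" by simp
  then obtain us where us: "(x @ b = u @ us \<and> us @ c = z) \<or> ((x @ b) @ us = u \<and> c = us @ z)"
    using append_eq_append_conv2[of "x @ b" c u z] by blast
  show ?case
  proof (cases "x @ b = u @ us \<and> us @ c = z \<and> us \<noteq> []")
    case False
    hence e: "u = x @ b @ us" "c = us @ z" using us by auto
    show ?thesis
    proof (cases "z = []")
      case True
      have "x @ b @ c \<in> ROC M" using ROC.step[OF step.hyps] .
      thus ?thesis using e True by simp
    next
      case False
      have A: "Acond M u (b @ us)" unfolding Acond_def using e(1) step.hyps(1,3) by blast
      have bn: "b @ us \<noteq> []" using step.hyps(3) by auto
      have M: "(b @ us) @ z \<in> M" using step.hyps(2) e(2) by simp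
      have "Good M u z"
        by (rule GoodI[OF A e(1) bn False M M, where e="[]" and y="[]"]) (auto intro: Cont.nil)
      thus ?thesis by blast
    qed
  next
    case True
    hence e: "x @ b = u @ us" "z = us @ c" "us \<noteq> []" by auto
    from step.IH[OF e(1) step.prems(2)] e(3) have "Good M u us" by blast
    then obtain a1 a2 c1 c2 y p e1 where
      I: "Acond M u a1" "u = p @ a2" "a2 \<noteq> []" "c1 \<noteq> []" "a1 @ c1 \<in> M" "a2 @ c2 \<in> M"
         "c2 = c1 @ e1" "us = c2 @ y" "Cont M c2 y" unfolding Good_def by blast
    from e(1) I(8) have "x @ b = u @ (c2 @ y)" by simp
    then obtain vs where vs: "(x = u @ vs \<and> vs @ b = c2 @ y) \<or> (x @ vs = u \<and> b = vs @ c2 @ y)"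
      using append_eq_append_conv2[of x b u "c2 @ y"] by blast
    show ?thesis
    proof (cases "\<exists>s. c2 @ y = s @ b")
      case True
      then obtain s where s: "c2 @ y = s @ b" by blast
      have C: "Cont M c2 (y @ c)" using cont_snoc[OF I(9) s step.hyps(3,2)] .
      have Z: "z = c2 @ (y @ c)" using e(2) I(8) by simp
      have "Good M u z" by (rule GoodI[OF I(1-7) Z C])
      thus ?thesis by blast
    next
      case False
      have v: "x @ vs = u" "b = vs @ c2 @ y" using vs False by metis+
      have vn: "vs \<noteq> []" using v False by auto
      have M: "vs @ (c2 @ y @ c) \<in> M" using step.hyps(2) v(2) by simp
      have E: "c2 @ y @ c = c1 @ (e1 @ y @ c)" using I(7) by simp
      have Z: "z = (c2 @ y @ c) @ []" using e(2) I(8) by simp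
      have "Good M u z" by (rule GoodI[OF I(1) v(1)[symmetric] vn I(4,5) M E Z Cont.nil])
      thus ?thesis by blast
    qed
  qed
qed

lemma bwd: "Acond M u a1 \<Longrightarrow> a1 @ c1 \<in> M \<Longrightarrow> c1 \<noteq> [] \<Longrightarrow> u = p @ a2 \<Longrightarrow> a2 \<noteq> [] \<Longrightarrow>
   a2 @ c2 \<in> M \<Longrightarrow> c2 = c1 @ e \<Longrightarrow> Cont M c2 y \<Longrightarrow> u @ c2 @ y \<in> ROC M"
proof -
  assume A: "Acond M u a1" "a1 @ c1 \<in> M" "c1 \<noteq> []" "u = p @ a2" "a2 \<noteq> []" "a2 @ c2 \<in> M"
    "c2 = c1 @ e" "Cont M c2 y"
  have 1: "u @ c1 \<in> ROC M"
  proof (cases "a1 = u")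
    case True thus ?thesis using A(2) by (auto intro: ROC.base)
  next
    case False
    then obtain x0 b d where "u = x0 @ b @ d" "x0 @ b \<in> ROC M" "a1 = b @ d" "2 \<le> length b"
      using A(1) unfolding Acond_def by blast
    thus ?thesis using ROC.step[of x0 b M "d @ c1"] A(2) by simp
  qed
  have "p @ (a2 @ c1) \<in> ROC M" using 1 A(4) by simp
  moreover have "(a2 @ c1) @ e \<in> M" using A(6,7) by simp
  moreover have "2 \<le> length (a2 @ c1)" using A(3,5) by (cases a2; cases c1) auto
  ultimately have "p @ (a2 @ c1) @ e \<in> ROC M" by (rule ROC.step)
  hence "u @ c2 \<in> ROC M" using A(4,7) by simp
  from cont_ROC[OF A(8), of u] this show ?thesis by simp
qed

definition G :: "'a list set \<Rightarrow> bool \<times> 'a list set set \<times> 'a list set set \<Rightarrow> 'a list set" where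
  "G M = (\<lambda>(\<beta>, S1, S2). {z. (\<beta> \<and> z = []) \<or> (\<exists>q1\<in>S1. \<exists>q2\<in>S2. \<exists>c1 c2 y. c1 \<in> q1 \<and> c1 \<noteq> [] \<and>
      c2 \<in> q2 \<and> (\<exists>e. c2 = c1 @ e) \<and> z = c2 @ y \<and> Cont M c2 y)})"

lemma dq_ROC: "u \<noteq> [] \<Longrightarrow> dq u (ROC M) =
   G M (u \<in> ROC M, (\<lambda>a1. dq a1 M) ` {a1. Acond M u a1}, (\<lambda>a2. dq a2 M) ` {a2. \<exists>p. u = p @ a2 \<and> a2 \<noteq> []})"
proof (intro equalityI subsetI)
  fix z assume u: "u \<noteq> []" and "z \<in> dq u (ROC M)"
  hence "u @ z \<in> ROC M" by (simp add: dq_def)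
  from fwd[OF this refl u]
  show "z \<in> G M (u \<in> ROC M, (\<lambda>a1. dq a1 M) ` {a1. Acond M u a1}, (\<lambda>a2. dq a2 M) ` {a2. \<exists>p. u = p @ a2 \<and> a2 \<noteq> []})"
  proof
    assume "z = [] \<and> u \<in> ROC M" thus ?thesis by (simp add: G_def)
  next
    assume "Good M u z"
    then obtain a1 a2 c1 c2 y p where h: "Acond M u a1" "u = p @ a2" "a2 \<noteq> []" "c1 \<noteq> []" "a1 @ c1 \<in> M"
     "a2 @ c2 \<in> M" "\<exists>e. c2 = c1 @ e" "z = c2 @ y" "Cont M c2 y" unfolding Good_def by blast
    show ?thesis unfolding G_def
      apply (simp only: case_prod_conv mem_Collect_eq)
      apply (rule disjI2)
      apply (rule bexI[of _ "dq a1 M"])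
       apply (rule bexI[of _ "dq a2 M"])
      using h by (auto simp: dq_def)
  qed
next
  fix z assume "z \<in> G M (u \<in> ROC M, (\<lambda>a1. dq a1 M) ` {a1. Acond M u a1}, (\<lambda>a2. dq a2 M) ` {a2. \<exists>p. u = p @ a2 \<and> a2 \<noteq> []})"
  hence "(u \<in> ROC M \<and> z = []) \<or> (\<exists>a1 a2 p c1 c2 y. Acond M u a1 \<and> u = p @ a2 \<and> a2 \<noteq> [] \<and> c1 \<in> dq a1 M \<and> c1 \<noteq> [] \<and>
      c2 \<in> dq a2 M \<and> (\<exists>e. c2 = c1 @ e) \<and> z = c2 @ y \<and> Cont M c2 y)"
    unfolding G_def by auto
  thus "z \<in> dq u (ROC M)"
  proof
    assume "u \<in> ROC M \<and> z = []" thus ?thesis by (simp add: dq_def)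
  next
    assume "\<exists>a1 a2 p c1 c2 y. Acond M u a1 \<and> u = p @ a2 \<and> a2 \<noteq> [] \<and> c1 \<in> dq a1 M \<and> c1 \<noteq> [] \<and>
      c2 \<in> dq a2 M \<and> (\<exists>e. c2 = c1 @ e) \<and> z = c2 @ y \<and> Cont M c2 y"
    then obtain a1 a2 p c1 c2 y e where h: "Acond M u a1" "u = p @ a2" "a2 \<noteq> []" "a1 @ c1 \<in> M" "c1 \<noteq> []"
      "a2 @ c2 \<in> M" "c2 = c1 @ e" "z = c2 @ y" "Cont M c2 y" by (auto simp: dq_def)
    from bwd[OF h(1,4,5,2,3,6,7,9)] show ?thesis using h(8) by (simp add: dq_def)
  qed
qed

lemma FQ_ROC: "FQ M \<Longrightarrow> FQ (ROC M)"
proof -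
  assume F: "FQ M"
  let ?Q = "range (\<lambda>w. dq w M)"
  have "range (\<lambda>u. dq u (ROC M)) \<subseteq> insert (ROC M) (G M ` (UNIV \<times> Pow ?Q \<times> Pow ?Q))"
  proof
    fix X assume "X \<in> range (\<lambda>u. dq u (ROC M))"
    then obtain u where X: "X = dq u (ROC M)" by auto
    show "X \<in> insert (ROC M) (G M ` (UNIV \<times> Pow ?Q \<times> Pow ?Q))"
    proof (cases "u = []")
      case True thus ?thesis using X by simp
    next
      case False
      show ?thesis unfolding X dq_ROC[OF False] by (rule insertI2, rule imageI) auto
    qed
  qed
  moreover have "finite (insert (ROC M) (G M ` (UNIV \<times> Pow ?Q \<times> Pow ?Q)))" using F unfolding FQ_def by simp
  ultimately show ?thesis unfolding FQ_def by (rule finite_subset)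
qed

lemma FQ_MM: "FQ L \<Longrightarrow> FQ (MM L)"
proof -
  assume F: "FQ L"
  have "range (\<lambda>w. dq w (MM L)) \<subseteq> (\<lambda>(q, k). q \<inter> {z. 2 \<le> k + length z}) ` (range (\<lambda>w. dq w L) \<times> {0, 1, 2::nat})"
  proof
    fix X assume "X \<in> range (\<lambda>w. dq w (MM L))"
    then obtain w where X: "X = dq w (MM L)" by auto
    have "X = dq w L \<inter> {z. 2 \<le> min (length w) 2 + length z}"
      unfolding X by (auto simp: dq_def MM_def)
    moreover have "min (length w) 2 \<le> (2::nat)" by simp
    hence "min (length w) 2 = 0 \<or> min (length w) 2 = 1 \<or> min (length w) 2 = (2::nat)" by linarith
    hence "min (length w) 2 \<in> {0, 1, 2::nat}" by blast
    ultimately show "X \<in> (\<lambda>(q, k). q \<inter> {z. 2 \<le> k + length z}) ` (range (\<lambda>w. dq w L) \<times> {0, 1, 2::nat})"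
      by (intro image_eqI[of _ _ "(dq w L, min (length w) 2)"]) auto
  qed
  moreover have "finite ((\<lambda>(q, k). q \<inter> {z. 2 \<le> k + length z}) ` (range (\<lambda>w. dq w L) \<times> {0, 1, 2::nat}))"
    using F unfolding FQ_def by simp
  ultimately show ?thesis unfolding FQ_def by (rule finite_subset)
qed

lemma ROC_lists: "w \<in> ROC M \<Longrightarrow> M \<subseteq> lists S \<Longrightarrow> w \<in> lists S"
  by (induction rule: ROC.induct) auto

theorem lemma4p10:
  fixes Sigma :: "'a set" and L :: "'a list set"
  assumes "finite Sigma"
    and "L \<subseteq> lists Sigma"
    and "regular L"
  shows "regular (OC2_star L)"
proof -
  have "FQ (ROC (MM L))" using FQ_ROC FQ_MM regular_FQ assms(3) by blast
  moreover have "MM L \<subseteq> lists Sigma" using assms(2) by (auto simp: MM_def)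
  hence "ROC (MM L) \<subseteq> lists Sigma" using ROC_lists by blast
  ultimately have "regular (ROC (MM L))" using FQ_regular assms(1) by blast
  thus ?thesis unfolding OC2_eq using regular_Un assms(3) by blast
qed


end
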